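(* Under the setting below, for all $u,u'\in\Omega_\beta$, $\|S(u)-S(u')\|^2\ge\sigma\|u-u'\|^2$.
   Context: Let $k\ge2$, $L,\beta>0$, $\sigma>1$, $C_1,C_2>1$, and $\Phi_0:(-L-\beta,L+\beta)^k\to\mathbb R$ of class $C^2$ with, for all $x$ in its domain, $(\partial_1\Phi_0(x))^2\ge C_1^{k-1}C_2\sigma^k$ and $(\partial_j\Phi_0(x))^2\le\frac{(C_1-1)(C_2-1)}{k-1}\sigma$ for $2\le j\le k$. Let $\gamma>0$ with $\gamma^{-2}=C_1\sigma$, $\Gamma(x)=(\gamma^{-(j-1)}x_j)_{j=1}^k$, $\Omega_\beta=\Gamma^{-1}((-L-\beta,L+\beta)^k)$, and $S:\Omega_\beta\to\mathbb R^k$, $S(u)=(u_2/\gamma,\dots,u_k/\gamma,\gamma^{k-1}\Phi_0(\Gamma u))$. $\|\cdot\|$ is the Euclidean norm. (In the paper, $\sigma$ is moreover chosen larger than a threshold $S_k(k+2)$; this is not used here.) *)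

theory Defs
  imports "HOL-Analysis.Analysis"
begin

text \<open>Coordinates of \<open>real^'n\<close> are enumerated as \<open>x_1,...,x_k\<close> via a bijection
  \<open>e :: nat \<Rightarrow> 'n\<close> from \<open>{1..k}\<close> onto the index type, so \<open>x_j = x $ e j\<close>.\<close>

definition C2_on :: "'a::euclidean_space set \<Rightarrow> ('a \<Rightarrow> real) \<Rightarrow> bool" where
  "C2_on S f \<longleftrightarrow> (\<exists>(f' :: 'a \<Rightarrow> 'a \<Rightarrow>\<^sub>L real) (f'' :: 'a \<Rightarrow> 'a \<Rightarrow>\<^sub>L ('a \<Rightarrow>\<^sub>L real)).
      (\<forall>x\<in>S. (f has_derivative blinfun_apply (f' x)) (at x) \<and>
              (f' has_derivative blinfun_apply (f'' x)) (at x)) \<and>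
      continuous_on S f'')"

definition partial_j :: "(nat \<Rightarrow> 'n::finite) \<Rightarrow> nat \<Rightarrow> (real^'n \<Rightarrow> real) \<Rightarrow> real^'n \<Rightarrow> real" where
  "partial_j e j f x = frechet_derivative f (at x) (axis (e j) 1)"

definition cube :: "real \<Rightarrow> (real^'n::finite) set" where
  "cube a = {x. \<forall>i. -a < x $ i \<and> x $ i < a}"

definition Gam :: "nat \<Rightarrow> (nat \<Rightarrow> 'n::finite) \<Rightarrow> real \<Rightarrow> real^'n \<Rightarrow> real^'n" where
  "Gam k e \<gamma> x = (\<chi> i. (inverse \<gamma>) ^ (inv_into {1..k} e i - 1) * x $ i)"

definition Smap :: "nat \<Rightarrow> (nat \<Rightarrow> 'n::finite) \<Rightarrow> real \<Rightarrow> (real^'n \<Rightarrow> real) \<Rightarrow> real^'n \<Rightarrow> real^'n" where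
  "Smap k e \<gamma> \<Phi>0 u = (\<chi> i. let j = inv_into {1..k} e i in
      if j < k then u $ e (j + 1) / \<gamma> else \<gamma> ^ (k - 1) * \<Phi>0 (Gam k e \<gamma> u))"

end

theory Submission imports Defs begin

lemma core:
  fixes d p :: "nat \<Rightarrow> real" and k :: nat and \<sigma> C1 C2 \<gamma> :: real
  assumes k: "k \<ge> 2" and \<sigma>: "\<sigma> > 1" and C1: "C1 > 1" and C2: "C2 > 1"
    and \<gamma>: "\<gamma> > 0" and \<gamma>2: "inverse (\<gamma>\<^sup>2) = C1 * \<sigma>"
    and p1: "(p 1)\<^sup>2 \<ge> C1 ^ (k - 1) * C2 * \<sigma> ^ k"
    and pj: "\<forall>j\<in>{2..k}. (p j)\<^sup>2 \<le> (C1 - 1) * (C2 - 1) / real (k - 1) * \<sigma>"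
  shows "\<sigma> * (\<Sum>j\<in>{1..k}. (d j)\<^sup>2) \<le> (\<Sum>j\<in>{2..k}. (d j / \<gamma>)\<^sup>2)
            + (\<Sum>j\<in>{1..k}. \<gamma> ^ (k - 1) * (inverse \<gamma>) ^ (j - 1) * d j * p j)\<^sup>2"
proof -
  define a where "a j = \<gamma> ^ (k - 1) * (inverse \<gamma>) ^ (j - 1) * p j" for j
  define A where "A = a 1 * d 1"
  define B where "B = (\<Sum>j\<in>{2..k}. a j * d j)"
  define Q where "Q = (\<Sum>j\<in>{2..k}. (d j)\<^sup>2)"
  have g2: "\<gamma>\<^sup>2 * (C1 * \<sigma>) = 1" using \<gamma>2 \<gamma> by (simp add: field_simps)
  have g1: "\<gamma> \<le> 1"
  proof (rule ccontr)
    assume "\<not> \<gamma> \<le> 1"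
    hence "\<gamma>\<^sup>2 > 1" by (simp add: one_less_power)
    moreover have "C1 * \<sigma> > 1" using C1 \<sigma> by (metis less_1_mult)
    ultimately have "\<gamma>\<^sup>2 * (C1 * \<sigma>) > 1" by (metis less_1_mult)
    thus False using g2 by simp
  qed
  have split1: "{1..k} = insert 1 {2..k}" using k by auto
  have sumeq: "(\<Sum>j\<in>{1..k}. \<gamma> ^ (k - 1) * (inverse \<gamma>) ^ (j - 1) * d j * p j) = A + B"
    unfolding split1 A_def B_def a_def by (simp add: algebra_simps)
  have sumd: "(\<Sum>j\<in>{1..k}. (d j)\<^sup>2) = (d 1)\<^sup>2 + Q"
    unfolding split1 Q_def by simp
  have sumg: "(\<Sum>j\<in>{2..k}. (d j / \<gamma>)\<^sup>2) = C1 * \<sigma> * Q"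
  proof -
    have "(d j / \<gamma>)\<^sup>2 = C1 * \<sigma> * (d j)\<^sup>2" for j
      by (subst \<gamma>2[symmetric]) (simp add: field_simps)
    thus ?thesis unfolding Q_def by (simp add: sum_distrib_left)
  qed
  have "(a 1)\<^sup>2 = (\<gamma>\<^sup>2) ^ (k - 1) * (p 1)\<^sup>2"
    unfolding a_def by (simp add: power_mult_distrib power_mult [symmetric] mult.commute)
  also have "\<dots> \<ge> (\<gamma>\<^sup>2) ^ (k - 1) * (C1 ^ (k - 1) * C2 * \<sigma> ^ k)"
    using p1 by (intro mult_left_mono) auto
  finally have "(a 1)\<^sup>2 \<ge> (\<gamma>\<^sup>2 * C1 * \<sigma>) ^ (k - 1) * C2 * \<sigma>"
  proof -
    assume h: "(\<gamma>\<^sup>2) ^ (k - 1) * (C1 ^ (k - 1) * C2 * \<sigma> ^ k) \<le> (a 1)\<^sup>2"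
    have "\<sigma> ^ k = \<sigma> ^ (k - 1) * \<sigma>" using k by (metis Suc_diff_1 le_trans one_le_numeral not_one_le_zero power_Suc2 gr0I)
    with h show ?thesis by (simp add: power_mult_distrib algebra_simps)
  qed
  hence a1: "(a 1)\<^sup>2 \<ge> C2 * \<sigma>" using g2 by (simp add: mult.assoc)
  have A2: "A\<^sup>2 \<ge> C2 * \<sigma> * (d 1)\<^sup>2"
    unfolding A_def power_mult_distrib by (intro mult_right_mono a1) auto
  have aj: "(a j)\<^sup>2 \<le> (C1 - 1) * (C2 - 1) / real (k - 1) * \<sigma>" if j: "j \<in> {2..k}" for j
  proof -
    have "\<gamma> ^ (k - 1) * (inverse \<gamma>) ^ (j - 1) = \<gamma> ^ (k - j)"
    proof -
      have "\<gamma> ^ (k - 1) = \<gamma> ^ (k - j) * \<gamma> ^ (j - 1)" using j by (simp add: power_add [symmetric])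
      thus ?thesis using \<gamma> by (simp add: power_inverse field_simps)
    qed
    hence "(a j)\<^sup>2 = (\<gamma> ^ (k - j))\<^sup>2 * (p j)\<^sup>2" unfolding a_def by (simp add: power_mult_distrib)
    also have "\<dots> \<le> 1 * (p j)\<^sup>2"
      by (intro mult_right_mono) (auto simp: power_le_one g1 \<gamma> less_imp_le)
    finally show ?thesis using pj j by (metis mult_1 order_trans)
  qed
  have "B\<^sup>2 \<le> (\<Sum>j\<in>{2..k}. (a j * d j)\<^sup>2) * real (k - 1)"
    unfolding B_def using sum_squared_le_sum_of_squares[of "\<lambda>j. a j * d j" "{2..k}"] by simp
  also have "\<dots> \<le> (\<Sum>j\<in>{2..k}. (C1 - 1) * (C2 - 1) / real (k - 1) * \<sigma> * (d j)\<^sup>2) * real (k - 1)"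
  proof (intro mult_right_mono sum_mono)
    fix j assume "j \<in> {2..k}"
    from aj[OF this] show "(a j * d j)\<^sup>2 \<le> (C1 - 1) * (C2 - 1) / real (k - 1) * \<sigma> * (d j)\<^sup>2"
      unfolding power_mult_distrib by (rule mult_right_mono) simp
  qed simp
  also have "\<dots> = (C1 - 1) * (C2 - 1) * \<sigma> * Q"
  proof -
    have "real k - 1 > 0" using k by simp
    thus ?thesis using k by (simp add: Q_def sum_distrib_left[symmetric] flip: sum_divide_distrib)
  qed
  finally have B2: "B\<^sup>2 \<le> (C1 - 1) * (C2 - 1) * \<sigma> * Q" .
  have iv: "C2 * (C2 - 1) * (A + B)\<^sup>2 \<ge> (C2 - 1) * A\<^sup>2 - C2 * B\<^sup>2"
  proof -
    have "C2 * (C2 - 1) * (A + B)\<^sup>2 - ((C2 - 1) * A\<^sup>2 - C2 * B\<^sup>2) = ((C2 - 1) * A + C2 * B)\<^sup>2"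
      by (simp add: power2_eq_square algebra_simps)
    thus ?thesis by (metis diff_ge_0_iff_ge zero_le_power2)
  qed
  have "C2 * (C2 - 1) * (A + B)\<^sup>2 \<ge> C2 * (C2 - 1) * (\<sigma> * (d 1)\<^sup>2 - (C1 - 1) * \<sigma> * Q)"
  proof -
    have "(C2 - 1) * A\<^sup>2 \<ge> (C2 - 1) * (C2 * \<sigma> * (d 1)\<^sup>2)" using A2 C2 by simp
    moreover have "C2 * B\<^sup>2 \<le> C2 * ((C1 - 1) * (C2 - 1) * \<sigma> * Q)" using B2 C2 by simp
    ultimately show ?thesis using iv by (simp add: algebra_simps)
  qed
  hence "(A + B)\<^sup>2 \<ge> \<sigma> * (d 1)\<^sup>2 - (C1 - 1) * \<sigma> * Q" using C2 by simp
  thus ?thesis unfolding sumeq sumd sumg by (simp add: algebra_simps)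
qed


lemma cube_convex:
  fixes x y :: "real^'n::finite"
  assumes "x \<in> cube a" "y \<in> cube a" "0 \<le> t" "t \<le> 1"
  shows "y + t *\<^sub>R (x - y) \<in> cube a"
proof -
  have "-a < y $ i + t * (x $ i - y $ i) \<and> y $ i + t * (x $ i - y $ i) < a" for i
  proof -
    have hx: "-a < x $ i" "x $ i < a" and hy: "-a < y $ i" "y $ i < a"
      using assms(1,2) by (auto simp: cube_def)
    define m where "m = min (y $ i + a) (x $ i + a)"
    define M where "M = min (a - y $ i) (a - x $ i)"
    have m: "m > 0" "M > 0" using hx hy by (auto simp: m_def M_def)
    have "(1 - t) * m \<le> (1 - t) * (y $ i + a)" "t * m \<le> t * (x $ i + a)"
      "(1 - t) * M \<le> (1 - t) * (a - y $ i)" "t * M \<le> t * (a - x $ i)"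
      using assms(3,4) by (intro mult_left_mono; simp add: m_def M_def)+
    thus ?thesis using m by (simp add: algebra_simps)
  qed
  thus ?thesis by (simp add: cube_def)
qed

lemma vec_expand: "(x::real^'n::finite) = (\<Sum>i\<in>UNIV. x $ i *\<^sub>R axis i 1)"
  using basis_expansion[of x] by (simp add: scalar_mult_eq_scaleR)

theorem proposition3p1:
  fixes k :: nat and e :: "nat \<Rightarrow> 'n::finite"
    and L \<beta> \<sigma> C1 C2 \<gamma> :: real and \<Phi>0 :: "real^'n \<Rightarrow> real"
  assumes k: "k \<ge> 2"
    and e: "bij_betw e {1..k} (UNIV :: 'n set)"
    and L: "L > 0" and \<beta>: "\<beta> > 0" and \<sigma>: "\<sigma> > 1" and C1: "C1 > 1" and C2: "C2 > 1"
    and smooth: "C2_on (cube (L + \<beta>)) \<Phi>0"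
    and d1: "\<forall>x \<in> cube (L + \<beta>). (partial_j e 1 \<Phi>0 x)\<^sup>2 \<ge> C1 ^ (k - 1) * C2 * \<sigma> ^ k"
    and dj: "\<forall>x \<in> cube (L + \<beta>). \<forall>j \<in> {2..k}.
               (partial_j e j \<Phi>0 x)\<^sup>2 \<le> (C1 - 1) * (C2 - 1) / real (k - 1) * \<sigma>"
    and \<gamma>: "\<gamma> > 0" and \<gamma>2: "inverse (\<gamma>\<^sup>2) = C1 * \<sigma>"
    and u: "Gam k e \<gamma> u \<in> cube (L + \<beta>)" and u': "Gam k e \<gamma> u' \<in> cube (L + \<beta>)"
  shows "(norm (Smap k e \<gamma> \<Phi>0 u - Smap k e \<gamma> \<Phi>0 u'))\<^sup>2 \<ge> \<sigma> * (norm (u - u'))\<^sup>2"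
proof -
  define ij where "ij = inv_into {1..k} e"
  have ije: "ij (e j) = j" if "j \<in> {1..k}" for j
    using e that unfolding ij_def by (simp add: bij_betw_inv_into_left)
  have ije': "inv_into {1..k} e (e j) = j" if "j \<in> {1..k}" for j
    using ije[OF that] by (simp add: ij_def)
  have gx: "Gam k e \<gamma> w $ e j = (inverse \<gamma>) ^ (j - 1) * w $ e j" if "j \<in> {1..k}" for j w
    unfolding Gam_def vec_lambda_beta ije'[OF that] by (rule refl)
  have sx: "Smap k e \<gamma> \<Phi>0 w $ e j = (if j < k then w $ e (j + 1) / \<gamma> else \<gamma> ^ (k - 1) * \<Phi>0 (Gam k e \<gamma> w))"
    if "j \<in> {1..k}" for j w
    unfolding Smap_def vec_lambda_beta ije'[OF that] Let_def by (rule refl)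
  have eij: "e (ij i) = i" for i
    using e unfolding ij_def by (simp add: bij_betw_inv_into_right)
  have ijr: "ij i \<in> {1..k}" for i
    using e unfolding ij_def by (metis UNIV_I bij_betw_inv_into bij_betwE)
  define x where "x = Gam k e \<gamma> u"
  define x' where "x' = Gam k e \<gamma> u'"
  define d where "d j = u $ e j - u' $ e j" for j
  obtain f' :: "(real^'n) \<Rightarrow> ((real^'n) \<Rightarrow>\<^sub>L real)" where
    f': "\<And>y. y \<in> cube (L + \<beta>) \<Longrightarrow> (\<Phi>0 has_derivative blinfun_apply (f' y)) (at y)"
    using smooth unfolding C2_on_def by blast
  have seg: "x' + t *\<^sub>R (x - x') \<in> cube (L + \<beta>)" if "0 \<le> t" "t \<le> 1" for t
    using cube_convex[OF u[folded x_def] u'[folded x'_def] that] .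
  have "\<exists>t\<in>{0..1}. (\<lambda>t. \<Phi>0 (x' + t *\<^sub>R (x - x'))) 1 - (\<lambda>t. \<Phi>0 (x' + t *\<^sub>R (x - x'))) 0
          = (\<lambda>h. f' (x' + t *\<^sub>R (x - x')) (h *\<^sub>R (x - x'))) (1 - 0)"
  proof (rule mvt_very_simple[where f' = "\<lambda>t h. f' (x' + t *\<^sub>R (x - x')) (h *\<^sub>R (x - x'))"])
    fix t :: real assume t: "0 \<le> t" "t \<le> 1"
    have "((\<lambda>t. x' + t *\<^sub>R (x - x')) has_derivative (\<lambda>h. h *\<^sub>R (x - x'))) (at t within {0..1})"
      by (auto intro!: derivative_eq_intros)
    from has_derivative_compose[OF this f'[OF seg[OF t]]]
    show "((\<lambda>t. \<Phi>0 (x' + t *\<^sub>R (x - x'))) has_derivative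
            (\<lambda>h. f' (x' + t *\<^sub>R (x - x')) (h *\<^sub>R (x - x')))) (at t within {0..1})"
      by (simp add: o_def)
  qed simp
  then obtain t where t: "0 \<le> t" "t \<le> 1"
    and mv: "\<Phi>0 x - \<Phi>0 x' = f' (x' + t *\<^sub>R (x - x')) (x - x')" by auto
  define \<xi> where "\<xi> = x' + t *\<^sub>R (x - x')"
  have \<xi>: "\<xi> \<in> cube (L + \<beta>)" unfolding \<xi>_def using seg t .
  define p where "p j = partial_j e j \<Phi>0 \<xi>" for j
  have pf: "p j = f' \<xi> (axis (e j) 1)" for j
    unfolding p_def partial_j_def using frechet_derivative_at[OF f'[OF \<xi>]] by simp
  have xc: "(x - x') $ e j = (inverse \<gamma>) ^ (j - 1) * d j" if "j \<in> {1..k}" for j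
    using that by (simp add: x_def x'_def gx d_def right_diff_distrib)
  have "\<Phi>0 x - \<Phi>0 x' = f' \<xi> (\<Sum>i\<in>UNIV. (x - x') $ i *\<^sub>R axis i 1)"
  proof -
    have ee: "x - x' = (\<Sum>i\<in>UNIV. (x - x') $ i *\<^sub>R axis i 1)" by (rule vec_expand)
    have "\<Phi>0 x - \<Phi>0 x' = f' \<xi> (x - x')" using mv unfolding \<xi>_def .
    also have "\<dots> = f' \<xi> (\<Sum>i\<in>UNIV. (x - x') $ i *\<^sub>R axis i 1)" using ee by (rule arg_cong)
    finally show ?thesis .
  qed
  also have "\<dots> = (\<Sum>i\<in>UNIV. (x - x') $ i * f' \<xi> (axis i 1))"
    by (simp add: blinfun.sum_right blinfun.scaleR_right)
  also have "\<dots> = (\<Sum>j\<in>{1..k}. (x - x') $ e j * f' \<xi> (axis (e j) 1))"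
    using sum.reindex_bij_betw[OF e, of "\<lambda>i. (x - x') $ i * f' \<xi> (axis i 1)"] by simp
  also have "\<dots> = (\<Sum>j\<in>{1..k}. (inverse \<gamma>) ^ (j - 1) * d j * p j)"
  proof (rule sum.cong[OF refl])
    fix j assume j: "j \<in> {1..k}"
    show "(x - x') $ e j * f' \<xi> (axis (e j) 1) = (inverse \<gamma>) ^ (j - 1) * d j * p j"
      using xc[OF j] pf[of j] by simp
  qed
  finally have D: "\<gamma> ^ (k - 1) * (\<Phi>0 x - \<Phi>0 x') =
      (\<Sum>j\<in>{1..k}. \<gamma> ^ (k - 1) * (inverse \<gamma>) ^ (j - 1) * d j * p j)"
    by (simp add: sum_distrib_left mult.assoc)
  define v where "v = Smap k e \<gamma> \<Phi>0 u - Smap k e \<gamma> \<Phi>0 u'"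
  have vc: "v $ e j = (if j < k then d (j + 1) / \<gamma> else \<gamma> ^ (k - 1) * (\<Phi>0 x - \<Phi>0 x'))"
    if "j \<in> {1..k}" for j
    using that by (simp add: v_def sx d_def x_def x'_def diff_divide_distrib right_diff_distrib)
  have "(norm v)\<^sup>2 = (\<Sum>i\<in>UNIV. (v $ i)\<^sup>2)"
    unfolding power2_norm_eq_inner inner_vec_def inner_real_def by (simp add: power2_eq_square)
  also have "\<dots> = (\<Sum>j\<in>{1..k}. (v $ e j)\<^sup>2)"
    using sum.reindex_bij_betw[OF e, of "\<lambda>i. (v $ i)\<^sup>2"] by simp
  also have "\<dots> = (\<Sum>j\<in>{1..k-1}. (d (j + 1) / \<gamma>)\<^sup>2) + (\<gamma> ^ (k - 1) * (\<Phi>0 x - \<Phi>0 x'))\<^sup>2"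
  proof -
    have s: "{1..k} = insert k {1..k-1}" using k by auto
    have "(\<Sum>j\<in>{1..k-1}. (v $ e j)\<^sup>2) = (\<Sum>j\<in>{1..k-1}. (d (j + 1) / \<gamma>)\<^sup>2)"
    proof (rule sum.cong[OF refl])
      fix j assume j: "j \<in> {1..k-1}"
      hence "j \<in> {1..k}" "j < k" by auto
      thus "(v $ e j)\<^sup>2 = (d (j + 1) / \<gamma>)\<^sup>2" by (simp add: vc)
    qed
    moreover have "(v $ e k)\<^sup>2 = (\<gamma> ^ (k - 1) * (\<Phi>0 x - \<Phi>0 x'))\<^sup>2"
      using k by (simp add: vc)
    ultimately show ?thesis unfolding s by (subst sum.insert) auto
  qed
  also have "(\<Sum>j\<in>{1..k-1}. (d (j + 1) / \<gamma>)\<^sup>2) = (\<Sum>j\<in>{2..k}. (d j / \<gamma>)\<^sup>2)"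
  proof -
    have "(\<Sum>j\<in>{2..k}. (d j / \<gamma>)\<^sup>2) = (\<Sum>j\<in>{Suc 1..Suc (k-1)}. (d j / \<gamma>)\<^sup>2)"
      using k by (simp add: numeral_2_eq_2)
    also have "\<dots> = (\<Sum>j\<in>{1..k-1}. (d (Suc j) / \<gamma>)\<^sup>2)"
      by (rule sum.shift_bounds_cl_Suc_ivl)
    finally show ?thesis by simp
  qed
  finally have N1: "(norm v)\<^sup>2 = (\<Sum>j\<in>{2..k}. (d j / \<gamma>)\<^sup>2)
      + (\<Sum>j\<in>{1..k}. \<gamma> ^ (k - 1) * (inverse \<gamma>) ^ (j - 1) * d j * p j)\<^sup>2"
    using D by simp
  have N2: "(norm (u - u'))\<^sup>2 = (\<Sum>j\<in>{1..k}. (d j)\<^sup>2)"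
  proof -
    have "(norm (u - u'))\<^sup>2 = (\<Sum>i\<in>UNIV. ((u - u') $ i)\<^sup>2)"
      unfolding power2_norm_eq_inner inner_vec_def inner_real_def by (simp add: power2_eq_square)
    also have "\<dots> = (\<Sum>j\<in>{1..k}. ((u - u') $ e j)\<^sup>2)"
      using sum.reindex_bij_betw[OF e, of "\<lambda>i. ((u - u') $ i)\<^sup>2"] by simp
    finally show ?thesis by (simp add: d_def)
  qed
  have p1: "(p 1)\<^sup>2 \<ge> C1 ^ (k - 1) * C2 * \<sigma> ^ k" using d1 \<xi> by (simp add: p_def)
  have pj: "\<forall>j\<in>{2..k}. (p j)\<^sup>2 \<le> (C1 - 1) * (C2 - 1) / real (k - 1) * \<sigma>"
    using dj \<xi> by (simp add: p_def)
  show ?thesis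
    using core[OF k \<sigma> C1 C2 \<gamma> \<gamma>2 p1 pj, of d] N1 N2 by (simp add: v_def)
qed

end
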